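(* Let $n\ge1$, $1\le\ell\le n$, and let $\widetilde{\mathbf k}=(\widetilde k_{ji})_{1\le i\le j\le n+1}$ be a tuple of non-negative integers. Then, in $\mathsf{Ch}_n$, $$\mathfrak C_{\widetilde{\mathbf k}}(a_1,\dots,a_\ell,a_\ell,a_{\ell+1},\dots,a_n)=\mathfrak C_{\mathbf k}(a_1,\dots,a_n),$$ where $\mathbf k=(k_{ji})_{1\le i\le j\le n}$ is given by $$k_{ji}=\begin{cases}\widetilde k_{ji}& \text{if } j<\ell,\\ \widetilde k_{\ell i}+\widetilde k_{(\ell+1)i}&\text{if } j=\ell>i,\\ \widetilde k_{\ell\ell}+2\widetilde k_{(\ell+1)\ell}+\widetilde k_{(\ell+1)(\ell+1)}&\text{if } j=i=\ell,\\ \widetilde k_{(j+1)i}&\text{if } j>\ell>i,\\ \widetilde k_{(j+1)\ell}+\widetilde k_{(j+1)(\ell+1)}&\text{if } j>i=\ell,\\ \widetilde k_{(j+1)(i+1)}&\text{if } j,i>\ell.\end{cases}$$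
   Context: The Chinese monoid of rank $m$ is $\mathsf{Ch}_m=\langle a_1,\dots,a_m\rangle$ with relations $a_ja_ka_i=a_ka_ja_i=a_ka_ia_j$ for all $1\le i\le j\le k\le m$. For a tuple $\mathbf k=(k_{ji})_{1\le i\le j\le m}$ of non-negative integers and elements $x_1,\dots,x_m$ of a monoid, the canonical-form word is $\mathfrak C_{\mathbf k}(x_1,\dots,x_m)=b_1b_2\cdots b_m$ where $b_j=(x_jx_1)^{k_{j1}}(x_jx_2)^{k_{j2}}\cdots(x_jx_{j-1})^{k_{j(j-1)}}x_j^{k_{jj}}$ (so $b_1=x_1^{k_{11}}$). Every element of $\mathsf{Ch}_m$ equals $\mathfrak C_{\mathbf k}(a_1,\dots,a_m)$ for a unique such tuple $\mathbf k$ (the canonical form). In the left-hand side above, the word $\mathfrak C_{\widetilde{\mathbf k}}$ in $n+1$ variables is evaluated at the $n+1$ elements $a_1,\dots,a_\ell,a_\ell,a_{\ell+1},\dots,a_n$ of $\mathsf{Ch}_n$ (the generator $a_\ell$ repeated). *)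

theory Defs
  imports Main
begin

text \<open>The Chinese monoid Ch_n is modelled as the free monoid on the generators
  a_1..a_n (words = lists of indices in {1..n}) modulo the congruence generated by
  the defining relations a_j a_k a_i = a_k a_j a_i = a_k a_i a_j (i \<le> j \<le> k).\<close>

inductive chinese_step :: "nat \<Rightarrow> nat list \<Rightarrow> nat list \<Rightarrow> bool" for n where
  rel1: "\<lbrakk>1 \<le> i; i \<le> j; j \<le> k; k \<le> n\<rbrakk> \<Longrightarrow>
         chinese_step n (u @ [j, k, i] @ v) (u @ [k, j, i] @ v)"
| rel2: "\<lbrakk>1 \<le> i; i \<le> j; j \<le> k; k \<le> n\<rbrakk> \<Longrightarrow>
         chinese_step n (u @ [k, j, i] @ v) (u @ [k, i, j] @ v)"

definition chinese_eq :: "nat \<Rightarrow> nat list \<Rightarrow> nat list \<Rightarrow> bool" where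
  "chinese_eq n u v \<longleftrightarrow> set u \<subseteq> {1..n} \<and> set v \<subseteq> {1..n} \<and>
     (symclp (chinese_step n))\<^sup>*\<^sup>* u v"

text \<open>Canonical-form word C_k(x_1,...,x_m) = b_1 ... b_m with
  b_j = (x_j x_1)^{k_{j1}} ... (x_j x_{j-1})^{k_{j(j-1)}} x_j^{k_{jj}};
  the elements x_i are given as words (representatives).\<close>
definition canon_word :: "nat \<Rightarrow> (nat \<Rightarrow> nat \<Rightarrow> nat) \<Rightarrow> (nat \<Rightarrow> 'a list) \<Rightarrow> 'a list" where
  "canon_word m k x =
     concat (map (\<lambda>j. concat (map (\<lambda>i. concat (replicate (k j i) (x j @ x i))) [1..<j])
                      @ concat (replicate (k j j) (x j))) [1..<m+1])"

definition collapse_k :: "nat \<Rightarrow> (nat \<Rightarrow> nat \<Rightarrow> nat) \<Rightarrow> nat \<Rightarrow> nat \<Rightarrow> nat" where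
  "collapse_k l kt j i =
     (if j < l then kt j i
      else if j = l \<and> i < l then kt l i + kt (l+1) i
      else if j = l \<and> i = l then kt l l + 2 * kt (l+1) l + kt (l+1) (l+1)
      else if j > l \<and> i < l then kt (j+1) i
      else if j > l \<and> i = l then kt (j+1) l + kt (j+1) (l+1)
      else if j > l \<and> i > l then kt (j+1) (i+1)
      else 0)"

end

theory Submission
  imports Defs
begin

abbreviation EQ :: "nat \<Rightarrow> nat list \<Rightarrow> nat list \<Rightarrow> bool" where
  "EQ n \<equiv> (symclp (chinese_step n))\<^sup>*\<^sup>*"

lemma step_ctx: "chinese_step n a b \<Longrightarrow> chinese_step n (p @ a @ s) (p @ b @ s)"
proof (induction rule: chinese_step.induct)
  case (rel1 i j k u v)
  show ?case using chinese_step.rel1[OF rel1, of "p @ u" "v @ s"] by simp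
next
  case (rel2 i j k u v)
  show ?case using chinese_step.rel2[OF rel2, of "p @ u" "v @ s"] by simp
qed

lemma EQ_ctx: "EQ n a b \<Longrightarrow> EQ n (p @ a @ s) (p @ b @ s)"
proof (induction rule: rtranclp_induct)
  case base then show ?case by simp
next
  case (step y z)
  have "symclp (chinese_step n) (p @ y @ s) (p @ z @ s)"
    using step(2) step_ctx unfolding symclp_def by blast
  then show ?case using step(3) by (meson rtranclp.rtrancl_into_rtrancl)
qed

lemma EQ_app: "EQ n a b \<Longrightarrow> EQ n c d \<Longrightarrow> EQ n (a @ c) (b @ d)"
proof -
  assume 1: "EQ n a b" and 2: "EQ n c d"
  have "EQ n ([] @ a @ c) ([] @ b @ c)" using EQ_ctx[OF 1] .
  moreover have "EQ n (b @ c @ []) (b @ d @ [])" using EQ_ctx[OF 2] .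
  ultimately show ?thesis by simp
qed

lemma EQ_sym: "EQ n a b \<Longrightarrow> EQ n b a"
proof (induction rule: rtranclp_induct)
  case base then show ?case by simp
next
  case (step y z)
  have "symclp (chinese_step n) z y" using step(2) by (auto simp: symclp_def)
  then show ?case using step(3) by (meson converse_rtranclp_into_rtranclp)
qed

lemma EQ_tr: "EQ n a b \<Longrightarrow> EQ n b' c \<Longrightarrow> b = b' \<Longrightarrow> a' = a \<Longrightarrow> c' = c \<Longrightarrow> EQ n a' c'"
  by (metis rtranclp_trans)

lemma EQ_step1: "\<lbrakk>1 \<le> i; i \<le> j; j \<le> k; k \<le> n\<rbrakk> \<Longrightarrow> EQ n [j,k,i] [k,j,i]"
  using chinese_step.rel1[of i j k n "[]" "[]"] by (simp add: symclp_def r_into_rtranclp)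
lemma EQ_step2: "\<lbrakk>1 \<le> i; i \<le> j; j \<le> k; k \<le> n\<rbrakk> \<Longrightarrow> EQ n [k,j,i] [k,i,j]"
  using chinese_step.rel2[of i j k n "[]" "[]"] by (simp add: symclp_def r_into_rtranclp)

lemma swap_le: assumes "1 \<le> i'" "i' \<le> i" "i < L" "L \<le> n"
  shows "EQ n [L,i,L,i'] [L,i',L,i]"
proof -
  have a: "EQ n [L,i,L,i'] [L,L,i,i']"
    using EQ_ctx[OF EQ_step1[of i' i L n], of "[L]" "[]"] assms by simp
  have b: "EQ n [L,L,i,i'] [L,L,i',i]"
    using EQ_ctx[OF EQ_step2[of i' i L n], of "[L]" "[]"] assms by simp
  have c: "EQ n [L,L,i',i] [L,i',L,i]"
    using EQ_ctx[OF EQ_step2[of i' L L n], of "[]" "[i]"] assms by simp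
  show ?thesis using a b c by (meson rtranclp_trans)
qed

lemma swap: assumes "1 \<le> i'" "1 \<le> i" "i' < L" "i < L" "L \<le> n"
  shows "EQ n [L,i,L,i'] [L,i',L,i]"
proof (cases "i' \<le> i")
  case True then show ?thesis using swap_le assms by auto
next
  case False then show ?thesis using swap_le[of i i' L n] assms EQ_sym by auto
qed

definition pw :: "nat \<Rightarrow> nat list \<Rightarrow> nat list" where
  "pw L xs = concat (map (\<lambda>i. [L,i]) xs)"

lemma pw_simps[simp]: "pw L [] = []" "pw L (x # xs) = L # x # pw L xs"
  "pw L (xs @ ys) = pw L xs @ pw L ys"
  by (auto simp: pw_def)

lemma pw_one: assumes "1 \<le> x" "x < L" "L \<le> n" "set ys \<subseteq> {1..<L}"
  shows "EQ n ([L,x] @ pw L ys) (pw L ys @ [L,x])"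
  using assms(4)
proof (induction ys)
  case Nil then show ?case by simp
next
  case (Cons y ys)
  have 1: "EQ n ([L,x,L,y] @ pw L ys) ([L,y,L,x] @ pw L ys)"
    using EQ_ctx[OF swap[of y x L n], of "[]" "pw L ys"] assms Cons.prems by auto
  have 2: "EQ n ([L,y] @ ([L,x] @ pw L ys)) ([L,y] @ (pw L ys @ [L,x]))"
    using EQ_ctx[OF Cons.IH, of "[L,y]" "[]"] Cons.prems by auto
  show ?case by (rule EQ_tr[OF 1 2]) simp_all
qed

lemma pw_comm: assumes "L \<le> n" "set xs \<subseteq> {1..<L}" "set ys \<subseteq> {1..<L}"
  shows "EQ n (pw L xs @ pw L ys) (pw L ys @ pw L xs)"
  using assms(2)
proof (induction xs)
  case Nil then show ?case by simp
next
  case (Cons x xs)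
  have 1: "EQ n ([L,x] @ (pw L xs @ pw L ys)) ([L,x] @ (pw L ys @ pw L xs))"
    using EQ_ctx[OF Cons.IH, of "[L,x]" "[]"] Cons.prems by auto
  have po: "EQ n ([L,x] @ pw L ys) (pw L ys @ [L,x])"
    using pw_one[of x L n ys] assms Cons.prems by auto
  have 2: "EQ n ([] @ ([L,x] @ pw L ys) @ pw L xs) ([] @ (pw L ys @ [L,x]) @ pw L xs)"
    using EQ_ctx[OF po, of "[]" "pw L xs"] by simp
  show ?case by (rule EQ_tr[OF 1 2]) simp_all
qed

lemma L_comm: assumes "L \<le> n" "set xs \<subseteq> {1..<L}"
  shows "EQ n (L # pw L xs) (pw L xs @ [L])"
  using assms(2)
proof (induction xs)
  case Nil then show ?case by simp
next
  case (Cons x xs)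
  have 1: "EQ n ([L,L,x] @ pw L xs) ([L,x,L] @ pw L xs)"
    using EQ_ctx[OF EQ_step2[of x L L n], of "[]" "pw L xs"] assms Cons.prems by auto
  have 2: "EQ n ([L,x] @ (L # pw L xs)) ([L,x] @ (pw L xs @ [L]))"
    using EQ_ctx[OF Cons.IH, of "[L,x]" "[]"] Cons.prems by auto
  show ?case by (rule EQ_tr[OF 1 2]) simp_all
qed

lemma rep_comm: assumes "L \<le> n" "set xs \<subseteq> {1..<L}"
  shows "EQ n (replicate m L @ pw L xs) (pw L xs @ replicate m L)"
proof (induction m)
  case 0 then show ?case by simp
next
  case (Suc m)
  have 1: "EQ n ([L] @ (replicate m L @ pw L xs)) ([L] @ (pw L xs @ replicate m L))"
    using EQ_ctx[OF Suc.IH, of "[L]" "[]"] by simp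
  have 2: "EQ n ([] @ (L # pw L xs) @ replicate m L) ([] @ (pw L xs @ [L]) @ replicate m L)"
    using EQ_ctx[OF L_comm[OF assms]] by blast
  show ?case by (rule EQ_tr[OF 1 2]) (simp_all add: replicate_app_Cons_same)
qed

definition FF :: "(nat \<Rightarrow> nat) \<Rightarrow> nat list \<Rightarrow> nat list" where
  "FF p is = concat (map (\<lambda>i. replicate (p i) i) is)"

lemma FF_simps[simp]: "FF p [] = []" "FF p (i # is) = replicate (p i) i @ FF p is"
  by (auto simp: FF_def)

lemma set_FF: "set (FF p is) \<subseteq> set is"
  by (auto simp: FF_def)

lemma FF_merge: assumes "L \<le> n" "set is \<subseteq> {1..<L}"
  shows "EQ n (pw L (FF p is) @ pw L (FF q is)) (pw L (FF (\<lambda>i. p i + q i) is))"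
  using assms(2)
proof (induction "is")
  case Nil then show ?case by simp
next
  case (Cons i "is")
  have s1: "set (FF p is) \<subseteq> {1..<L}" "set (FF q is) \<subseteq> {1..<L}"
    using set_FF[of p "is"] set_FF[of q "is"] Cons.prems by auto
  have s3: "set is \<subseteq> {1..<L}" using Cons.prems by auto
  have s2: "set (replicate (q i) i) \<subseteq> {1..<L}" using Cons.prems by auto
  have 1: "EQ n (pw L (replicate (p i) i) @ (pw L (FF p is) @ pw L (replicate (q i) i)) @ pw L (FF q is))
                (pw L (replicate (p i) i) @ (pw L (replicate (q i) i) @ pw L (FF p is)) @ pw L (FF q is))"
    using EQ_ctx[OF pw_comm[OF assms(1) s1(1) s2]] by blast
  have 2: "EQ n ((pw L (replicate (p i) i) @ pw L (replicate (q i) i)) @ (pw L (FF p is) @ pw L (FF q is)) @ [])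
                ((pw L (replicate (p i) i) @ pw L (replicate (q i) i)) @ pw L (FF (\<lambda>i. p i + q i) is) @ [])"
    using EQ_ctx[OF Cons.IH[OF s3], of "pw L (replicate (p i) i) @ pw L (replicate (q i) i)" "[]"] by simp
  show ?case by (rule EQ_tr[OF 1 2]) (simp_all add: replicate_add)
qed

lemma upt_split: "i \<le> j \<Longrightarrow> j \<le> k \<Longrightarrow> [i..<k] = [i..<j] @ [j..<k]"
  using upt_add_eq_append[of i j "k - j"] by simp

lemma pw_rep: "concat (replicate m [L,i]) = pw L (replicate m i)"
  by (induction m) auto

lemma blk_pw: "concat (map (\<lambda>i. concat (replicate (k i) [L,i])) is) = pw L (FF k is)"
  by (induction "is") (auto simp: pw_rep)

lemma rep1: "concat (replicate m [a]) = replicate m a"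
  by (induction m) auto

lemma rep2: "concat (replicate m [a,a]) = replicate (2*m) a"
  by (induction m) auto

lemma rep_add2: "concat (replicate a xs) @ concat (replicate b xs) = concat (replicate (a+b) xs)"
  by (simp add: replicate_add)

lemma cm_sub: "(\<And>a. a \<in> set xs \<Longrightarrow> set (f a) \<subseteq> S) \<Longrightarrow> set (concat (map f xs)) \<subseteq> S"
  by auto
lemma rep_sub: "set ys \<subseteq> S \<Longrightarrow> set (concat (replicate k ys)) \<subseteq> S"
  by (induction k) auto
lemma set_canon: assumes h: "\<And>j. 1 \<le> j \<Longrightarrow> j \<le> m \<Longrightarrow> set (x j) \<subseteq> S"
  shows "set (canon_word m k x) \<subseteq> S"
  unfolding canon_word_def
proof (rule cm_sub)
  fix j assume j: "j \<in> set [1..<m+1]"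
  have j2: "1 \<le> j" "j \<le> m" using j by auto
  have hj: "set (x j) \<subseteq> S" using h[OF j2] .
  have "set (concat (map (\<lambda>i. concat (replicate (k j i) (x j @ x i))) [1..<j])) \<subseteq> S"
  proof (rule cm_sub)
    fix i assume i: "i \<in> set [1..<j]"
    have i2: "1 \<le> i" "i \<le> m" using i j2 by auto
    have "set (x i) \<subseteq> S" using h[OF i2] .
    then show "set (concat (replicate (k j i) (x j @ x i))) \<subseteq> S" using hj by (intro rep_sub) auto
  qed
  moreover have "set (concat (replicate (k j j) (x j))) \<subseteq> S" using hj by (rule rep_sub)
  ultimately show "set (concat (map (\<lambda>i. concat (replicate (k j i) (x j @ x i))) [1..<j])
                      @ concat (replicate (k j j) (x j))) \<subseteq> S" by simp
qed

theorem lemma1p4: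
  fixes n l :: nat and kt :: "nat \<Rightarrow> nat \<Rightarrow> nat"
  assumes "1 \<le> n" and "1 \<le> l" and "l \<le> n"
  shows "chinese_eq n
           (canon_word (n+1) kt (\<lambda>i. [if i \<le> l then i else i - 1]))
           (canon_word n (collapse_k l kt) (\<lambda>i. [i]))"
proof -
  define x where "x = (\<lambda>i::nat. [if i \<le> l then i else i - 1])"
  define ck where "ck = collapse_k l kt"
  define blkL where "blkL = (\<lambda>j. concat (map (\<lambda>i. concat (replicate (kt j i) (x j @ x i))) [1..<j])
                      @ concat (replicate (kt j j) (x j)))"
  define blkR where "blkR = (\<lambda>j. concat (map (\<lambda>i. concat (replicate (ck j i) ([j] @ [i]))) [1..<j])
                      @ concat (replicate (ck j j) [j]))"
  have cL: "canon_word (n+1) kt x = concat (map blkL [1..<n+1+1])"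
    unfolding canon_word_def blkL_def by simp
  have cR: "canon_word n ck (\<lambda>i. [i]) = concat (map blkR [1..<n+1])"
    unfolding canon_word_def blkR_def by simp
  have u1: "[1..<n+1+1] = [1..<l] @ l # (l+1) # map Suc [l+1..<n+1]"
  proof -
    have "[1..<n+1+1] = [1..<l] @ [l..<n+2]" using assms upt_split[of 1 l "n+2"]
      by (simp add: numeral_2_eq_2)
    also have "[l..<n+2] = l # (l+1) # [l+2..<n+2]" using assms
      by (simp add: upt_conv_Cons)
    also have "[l+2..<n+2] = map Suc [l+1..<n+1]" by (simp add: map_Suc_upt)
    finally show ?thesis .
  qed
  have u2: "[1..<n+1] = [1..<l] @ l # [l+1..<n+1]"
    using assms upt_split[of 1 l "n+1"] by (simp add: upt_conv_Cons)
  have P: "map blkL [1..<l] = map blkR [1..<l]"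
  proof (rule map_cong[OF refl])
    fix j assume j: "j \<in> set [1..<l]"
    have "map (\<lambda>i. concat (replicate (kt j i) (x j @ x i))) [1..<j]
        = map (\<lambda>i. concat (replicate (ck j i) ([j] @ [i]))) [1..<j]"
      using j by (intro map_cong[OF refl]) (auto simp: x_def ck_def collapse_k_def)
    note h = this
    show "blkL j = blkR j" unfolding blkL_def blkR_def h using j by (simp add: x_def ck_def collapse_k_def)
  qed
  have S: "map (blkL \<circ> Suc) [l+1..<n+1] = map blkR [l+1..<n+1]"
  proof (rule map_cong[OF refl])
    fix j assume j: "j \<in> set [l+1..<n+1]"
    then have jl: "l < j" "j \<le> n" by auto
    have v1: "[1..<Suc j] = [1..<l] @ l # (l+1) # map Suc [l+1..<j]"
    proof -
      have "[1..<Suc j] = [1..<l] @ [l..<Suc j]" using assms jl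
        by (intro upt_split) auto
      also have "[l..<Suc j] = l # (l+1) # [l+2..<Suc j]" using jl by (simp add: upt_conv_Cons)
      also have "[l+2..<Suc j] = map Suc [l+1..<j]" by (simp add: map_Suc_upt)
      finally show ?thesis .
    qed
    have v2: "[1..<j] = [1..<l] @ l # [l+1..<j]"
      using assms jl upt_split[of 1 l j] by (simp add: upt_conv_Cons)
    have a: "map (\<lambda>i. concat (replicate (kt (Suc j) i) (x (Suc j) @ x i))) [1..<l]
          = map (\<lambda>i. concat (replicate (ck j i) ([j] @ [i]))) [1..<l]"
      using jl by (intro map_cong[OF refl]) (auto simp: x_def ck_def collapse_k_def)
    have b: "map (\<lambda>i. concat (replicate (kt (Suc j) i) (x (Suc j) @ x i))) (map Suc [l+1..<j])
          = map (\<lambda>i. concat (replicate (ck j i) ([j] @ [i]))) [l+1..<j]"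
      using jl by (auto simp: x_def ck_def collapse_k_def)
    have c: "concat (replicate (kt (Suc j) l) (x (Suc j) @ x l)) @
             concat (replicate (kt (Suc j) (l+1)) (x (Suc j) @ x (l+1)))
           = concat (replicate (ck j l) ([j] @ [l]))"
      using jl by (simp add: x_def ck_def collapse_k_def rep_add2 del: replicate_add)
    have d: "concat (replicate (kt (Suc j) (Suc j)) (x (Suc j))) = concat (replicate (ck j j) [j])"
      using jl by (simp add: x_def ck_def collapse_k_def)
    have "(blkL \<circ> Suc) j = concat (map (\<lambda>i. concat (replicate (kt (Suc j) i) (x (Suc j) @ x i))) [1..<l])
       @ (concat (replicate (kt (Suc j) l) (x (Suc j) @ x l)) @
             concat (replicate (kt (Suc j) (l+1)) (x (Suc j) @ x (l+1))))
       @ concat (map (\<lambda>i. concat (replicate (kt (Suc j) i) (x (Suc j) @ x i))) (map Suc [l+1..<j]))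
       @ concat (replicate (kt (Suc j) (Suc j)) (x (Suc j)))"
      unfolding comp_def blkL_def v1 by simp
    also have "\<dots> = concat (map (\<lambda>i. concat (replicate (ck j i) ([j] @ [i]))) [1..<l])
       @ concat (replicate (ck j l) ([j] @ [l]))
       @ concat (map (\<lambda>i. concat (replicate (ck j i) ([j] @ [i]))) [l+1..<j])
       @ concat (replicate (ck j j) [j])"
      by (simp only: a b c d)
    also have "\<dots> = blkR j" unfolding blkR_def v2 by simp
    finally show "(blkL \<circ> Suc) j = blkR j" .
  qed
  have M: "EQ n (blkL l @ blkL (l+1)) (blkR l)"
  proof -
    define A where "A = FF (kt l) [1..<l]"
    define B where "B = FF (kt (l+1)) [1..<l]"
    define C where "C = FF (\<lambda>i. kt l i + kt (l+1) i) [1..<l]"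
    have sA: "set A \<subseteq> {1..<l}" "set B \<subseteq> {1..<l}"
      using set_FF[of _ "[1..<l]"] unfolding A_def B_def by auto
    have e1: "blkL l = pw l A @ replicate (kt l l) l"
    proof -
      have "map (\<lambda>i. concat (replicate (kt l i) (x l @ x i))) [1..<l]
          = map (\<lambda>i. concat (replicate (kt l i) [l,i])) [1..<l]"
        by (intro map_cong[OF refl]) (auto simp: x_def)
      note h = this
      show ?thesis unfolding blkL_def h blk_pw A_def by (simp add: x_def rep1)
    qed
    have e2: "blkL (l+1) = pw l B @ replicate (2 * kt (l+1) l) l @ replicate (kt (l+1) (l+1)) l"
    proof -
      have "map (\<lambda>i. concat (replicate (kt (l+1) i) (x (l+1) @ x i))) [1..<l]
          = map (\<lambda>i. concat (replicate (kt (l+1) i) [l,i])) [1..<l]"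
        by (intro map_cong[OF refl]) (auto simp: x_def)
      note h = this
      have sp: "[1..<l+1] = [1..<l] @ [l]" using assms by simp
      show ?thesis unfolding blkL_def sp map_append concat_append h blk_pw B_def
        by (simp add: x_def rep1 rep2)
    qed
    have e3: "blkR l = pw l C @ replicate (kt l l + 2 * kt (l+1) l + kt (l+1) (l+1)) l"
    proof -
      have "map (\<lambda>i. concat (replicate (ck l i) ([l] @ [i]))) [1..<l]
          = map (\<lambda>i. concat (replicate (kt l i + kt (l+1) i) [l,i])) [1..<l]"
        by (intro map_cong[OF refl]) (auto simp: ck_def collapse_k_def)
      note h = this
      show ?thesis unfolding blkR_def h blk_pw C_def by (simp add: rep1 ck_def collapse_k_def)
    qed
    have 1: "EQ n (pw l A @ (replicate (kt l l) l @ pw l B) @ replicate (2 * kt (l+1) l) l @ replicate (kt (l+1) (l+1)) l)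
                  (pw l A @ (pw l B @ replicate (kt l l) l) @ replicate (2 * kt (l+1) l) l @ replicate (kt (l+1) (l+1)) l)"
      by (rule EQ_ctx[OF rep_comm[OF assms(3) sA(2)]])
    have 2: "EQ n ([] @ (pw l A @ pw l B) @ replicate (kt l l + 2 * kt (l+1) l + kt (l+1) (l+1)) l)
                  ([] @ pw l C @ replicate (kt l l + 2 * kt (l+1) l + kt (l+1) (l+1)) l)"
      using EQ_ctx[OF FF_merge[OF assms(3), of "[1..<l]" "kt l" "kt (l+1)"], of "[]"
          "replicate (kt l l + 2 * kt (l+1) l + kt (l+1) (l+1)) l"]
      unfolding A_def B_def C_def by simp
    show ?thesis unfolding e1 e2 e3 by (rule EQ_tr[OF 1 2]) (simp_all add: replicate_add[symmetric])
  qed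
  have eqP: "concat (map blkL [1..<l]) = concat (map blkR [1..<l])" by (rule arg_cong[OF P])
  have eqS: "concat (map blkL (map Suc [l+1..<n+1])) = concat (map blkR [l+1..<n+1])"
    using S by (simp only: map_map)
  have fL: "canon_word (n+1) kt x = concat (map blkR [1..<l]) @ (blkL l @ blkL (l+1)) @ concat (map blkR [l+1..<n+1])"
    unfolding cL u1 eqP[symmetric] eqS[symmetric]
    by (simp only: map_append concat_append list.map concat.simps append_assoc)
  have fR: "canon_word n ck (\<lambda>i. [i]) = concat (map blkR [1..<l]) @ blkR l @ concat (map blkR [l+1..<n+1])"
    unfolding cR u2
    by (simp only: map_append concat_append list.map concat.simps append_assoc)
  have main: "EQ n (canon_word (n+1) kt x) (canon_word n ck (\<lambda>i. [i]))"
    unfolding fL fR by (rule EQ_ctx[OF M])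
  have setL: "set (canon_word (n+1) kt x) \<subseteq> {1..n}"
    by (rule set_canon) (use assms in \<open>auto simp: x_def\<close>)
  have setR: "set (canon_word n ck (\<lambda>i. [i])) \<subseteq> {1..n}"
    by (rule set_canon) (use assms in auto)
  have "chinese_eq n (canon_word (n+1) kt x) (canon_word n ck (\<lambda>i. [i]))"
    unfolding chinese_eq_def using main setL setR by (intro conjI)
  then show ?thesis unfolding x_def ck_def .
qed

end
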